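(* Let $\alpha\in(0,1)$ be irrational, let $$C_n=\prod_{t=1}^{q_n-1}\Big(1-\frac{s_{n0}^2}{s_{nt}^2}\Big)^{1/2},$$ and let $\kappa_n=\lfloor q_n^{1/2}\rfloor$. Then for sufficiently large $n$, $$C_n=\prod_{t=1}^{\kappa_n}\Big(1-\frac1{4(t/c_n-\xi_{nt})^2}\Big)+O(\kappa_n^{-1}).$$
   Context: Continued fraction notation: - $\alpha=[0;a_1,a_2,\ldots]$. - $q_0=0$, $q_1=1$, $q_{n+1}=a_nq_n+q_{n-1}$, and $p_0=1$, $p_1=0$, $p_{n+1}=a_np_n+p_{n-1}$. - $\Lambda_n=q_n\alpha-p_n$. - $c_n=1/(\alpha_n^++\alpha_n^-)$, where $\alpha_n^+=[a_n;a_{n+1},\ldots]$ and $\alpha_n^-=[0;a_{n-1},\ldots,a_1]$. Auxiliary quantities, for $t\in\{0,\ldots,q_n-1\}$: - $\xi_{nt}=\{tq_{n-1}/q_n\}-\frac12$; - $s_{nt}=2\sin\big(\pi[t/q_n-|\Lambda_n|\xi_{nt}]\big)$. The $O$-constant is independent of $n$. *)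

theory Defs
  imports Complex_Main
begin

text \<open>Continued fraction expansion alpha = [0; a_1, a_2, ...] via the Gauss map:
  x_0 = alpha, x_{k+1} = frac (1 / x_k), and a_n = floor (1 / x_{n-1}) for n >= 1.\<close>

fun cf_x :: "real \<Rightarrow> nat \<Rightarrow> real" where
  "cf_x \<alpha> 0 = \<alpha>"
| "cf_x \<alpha> (Suc k) = frac (1 / cf_x \<alpha> k)"

definition cf_a :: "real \<Rightarrow> nat \<Rightarrow> nat" where
  "cf_a \<alpha> n = nat \<lfloor>1 / cf_x \<alpha> (n - 1)\<rfloor>"

fun cf_q :: "real \<Rightarrow> nat \<Rightarrow> nat" where
  "cf_q \<alpha> 0 = 0"
| "cf_q \<alpha> (Suc 0) = 1"
| "cf_q \<alpha> (Suc (Suc n)) = cf_a \<alpha> (Suc n) * cf_q \<alpha> (Suc n) + cf_q \<alpha> n"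

fun cf_p :: "real \<Rightarrow> nat \<Rightarrow> nat" where
  "cf_p \<alpha> 0 = 1"
| "cf_p \<alpha> (Suc 0) = 0"
| "cf_p \<alpha> (Suc (Suc n)) = cf_a \<alpha> (Suc n) * cf_p \<alpha> (Suc n) + cf_p \<alpha> n"

definition cf_Lambda :: "real \<Rightarrow> nat \<Rightarrow> real" where
  "cf_Lambda \<alpha> n = real (cf_q \<alpha> n) * \<alpha> - real (cf_p \<alpha> n)"

fun cf_fin0 :: "nat list \<Rightarrow> real" where
  "cf_fin0 [] = 0"
| "cf_fin0 (b # bs) = 1 / (real b + cf_fin0 bs)"

text \<open>alpha_n^+ = [a_n; a_{n+1}, ...] (the complete quotient, = 1 / x_{n-1}),
  alpha_n^- = [0; a_{n-1}, ..., a_1].\<close>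

definition cf_alpha_plus :: "real \<Rightarrow> nat \<Rightarrow> real" where
  "cf_alpha_plus \<alpha> n = real (cf_a \<alpha> n) + cf_x \<alpha> n"

definition cf_alpha_minus :: "real \<Rightarrow> nat \<Rightarrow> real" where
  "cf_alpha_minus \<alpha> n = cf_fin0 (map (cf_a \<alpha>) (rev [1..<n]))"

definition cf_c :: "real \<Rightarrow> nat \<Rightarrow> real" where
  "cf_c \<alpha> n = 1 / (cf_alpha_plus \<alpha> n + cf_alpha_minus \<alpha> n)"

definition cf_xi :: "real \<Rightarrow> nat \<Rightarrow> nat \<Rightarrow> real" where
  "cf_xi \<alpha> n t = frac (real t * real (cf_q \<alpha> (n - 1)) / real (cf_q \<alpha> n)) - 1 / 2"

definition cf_s :: "real \<Rightarrow> nat \<Rightarrow> nat \<Rightarrow> real" where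
  "cf_s \<alpha> n t = 2 * sin (pi * (real t / real (cf_q \<alpha> n) - \<bar>cf_Lambda \<alpha> n\<bar> * cf_xi \<alpha> n t))"

definition cf_C :: "real \<Rightarrow> nat \<Rightarrow> real" where
  "cf_C \<alpha> n = (\<Prod>t = 1..cf_q \<alpha> n - 1. sqrt (1 - (cf_s \<alpha> n 0)\<^sup>2 / (cf_s \<alpha> n t)\<^sup>2))"

definition cf_kappa :: "real \<Rightarrow> nat \<Rightarrow> nat" where
  "cf_kappa \<alpha> n = nat \<lfloor>sqrt (real (cf_q \<alpha> n))\<rfloor>"

end

theory Submission
  imports Defs
begin


lemma cf_x_bounds:
  assumes "0 < \<alpha>" "\<alpha> < 1" "\<alpha> \<notin> \<rat>"
  shows "0 < cf_x \<alpha> k \<and> cf_x \<alpha> k < 1 \<and> cf_x \<alpha> k \<notin> \<rat>"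
proof (induction k)
  case 0
  then show ?case using assms by simp
next
  case (Suc k)
  define x where "x = cf_x \<alpha> k"
  have x: "0 < x" "x < 1" "x \<notin> \<rat>" using Suc x_def by auto
  have y: "1 / x \<notin> \<rat>"
  proof
    assume "1 / x \<in> \<rat>"
    then have "1 / (1 / x) \<in> \<rat>" by (rule Rats_divide[OF Rats_1])
    then show False using x by simp
  qed
  have fr: "frac (1/x) \<notin> \<rat>"
  proof
    assume "frac (1/x) \<in> \<rat>"
    then have "frac (1/x) + of_int \<lfloor>1/x\<rfloor> \<in> \<rat>" by (intro Rats_add Rats_of_int)
    then show False using y by (simp add: frac_def)
  qed
  have "1/x \<notin> \<int>" using y by (metis Ints_cases Rats_of_int)
  then have "frac (1/x) \<noteq> 0" by (simp add: frac_eq_0_iff)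
  then have "0 < frac (1/x)" using frac_ge_0[of "1/x"] by linarith
  then show ?case using fr frac_lt_1[of "1/x"] by (simp add: x_def)
qed

lemma inv_x:
  assumes "0 < \<alpha>" "\<alpha> < 1" "\<alpha> \<notin> \<rat>"
  shows "1 / cf_x \<alpha> k = real (cf_a \<alpha> (Suc k)) + cf_x \<alpha> (Suc k)"
proof -
  have x: "0 < cf_x \<alpha> k" "cf_x \<alpha> k < 1" using cf_x_bounds[OF assms] by auto
  then have "1 < 1 / cf_x \<alpha> k" by simp
  then have "0 \<le> 1 / cf_x \<alpha> k" by linarith
  then have "0 \<le> \<lfloor>1 / cf_x \<alpha> k\<rfloor>" by simp
  then show ?thesis by (simp add: cf_a_def frac_def)
qed

lemma cf_a_ge1:
  assumes "0 < \<alpha>" "\<alpha> < 1" "\<alpha> \<notin> \<rat>"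
  shows "cf_a \<alpha> n \<ge> 1"
proof -
  have x: "0 < cf_x \<alpha> (n-1)" "cf_x \<alpha> (n-1) < 1" using cf_x_bounds[OF assms] by auto
  then have "1 < 1 / cf_x \<alpha> (n-1)" by simp
  then have "1 \<le> \<lfloor>1 / cf_x \<alpha> (n-1)\<rfloor>" by (simp add: le_floor_iff)
  then show ?thesis unfolding cf_a_def by linarith
qed

lemma q_grow:
  assumes "0 < \<alpha>" "\<alpha> < 1" "\<alpha> \<notin> \<rat>"
  shows "cf_q \<alpha> (Suc n) \<ge> 1 \<and> cf_q \<alpha> (Suc (Suc n)) \<ge> n + 1"
proof (induction n)
  case 0
  then show ?case using cf_a_ge1[OF assms, of 1] by simp
next
  case (Suc n)
  have a: "cf_a \<alpha> (Suc (Suc n)) \<ge> 1" using cf_a_ge1[OF assms] by blast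
  have m: "cf_a \<alpha> (Suc (Suc n)) * cf_q \<alpha> (Suc (Suc n)) \<ge> cf_q \<alpha> (Suc (Suc n))"
    using a by (metis mult_1 mult_le_mono1)
  have e: "cf_q \<alpha> (Suc (Suc (Suc n))) = cf_a \<alpha> (Suc (Suc n)) * cf_q \<alpha> (Suc (Suc n)) + cf_q \<alpha> (Suc n)"
    by (rule cf_q.simps(3))
  show ?case using Suc m unfolding e by linarith
qed

lemma alpha_formula:
  assumes "0 < \<alpha>" "\<alpha> < 1" "\<alpha> \<notin> \<rat>"
  shows "\<alpha> * (real (cf_q \<alpha> (Suc m)) / cf_x \<alpha> m + real (cf_q \<alpha> m))
       = real (cf_p \<alpha> (Suc m)) / cf_x \<alpha> m + real (cf_p \<alpha> m)"
proof (induction m)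
  case 0
  then show ?case using assms by simp
next
  case (Suc m)
  define x' where "x' = cf_x \<alpha> (Suc m)"
  define a where "a = real (cf_a \<alpha> (Suc m))"
  have x'pos: "x' > 0" using cf_x_bounds[OF assms, of "Suc m"] unfolding x'_def by blast
  have inv: "1 / cf_x \<alpha> m = a + x'" using inv_x[OF assms] a_def x'_def by simp
  have IH: "\<alpha> * (real (cf_q \<alpha> (Suc m)) * (a + x') + real (cf_q \<alpha> m))
       = real (cf_p \<alpha> (Suc m)) * (a + x') + real (cf_p \<alpha> m)"
    using Suc inv by (metis divide_inverse inverse_eq_divide)
  have "\<alpha> * (real (cf_q \<alpha> (Suc (Suc m))) + real (cf_q \<alpha> (Suc m)) * x')
      = real (cf_p \<alpha> (Suc (Suc m))) + real (cf_p \<alpha> (Suc m)) * x'"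
    using IH by (simp add: a_def algebra_simps)
  then show ?case using x'pos unfolding x'_def[symmetric]
    by (simp add: field_simps)
qed

lemma det_formula:
  "int (cf_q \<alpha> (Suc m)) * int (cf_p \<alpha> m) - int (cf_p \<alpha> (Suc m)) * int (cf_q \<alpha> m) = (-1) ^ m"
proof (induction m)
  case 0
  then show ?case by simp
next
  case (Suc m)
  then show ?case by (simp add: algebra_simps)
qed

lemma Lambda_abs:
  assumes "0 < \<alpha>" "\<alpha> < 1" "\<alpha> \<notin> \<rat>"
  shows "\<bar>cf_Lambda \<alpha> (Suc m)\<bar> = 1 / (real (cf_q \<alpha> (Suc m)) / cf_x \<alpha> m + real (cf_q \<alpha> m))"
proof -
  define x where "x = cf_x \<alpha> m"
  define D where "D = real (cf_q \<alpha> (Suc m)) / x + real (cf_q \<alpha> m)"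
  have xpos: "x > 0" using cf_x_bounds[OF assms] x_def by auto
  have q1: "cf_q \<alpha> (Suc m) \<ge> 1" using q_grow[OF assms] by blast
  have Dpos: "D > 0" unfolding D_def using xpos q1 by (simp add: add_pos_nonneg)
  have af: "\<alpha> * D = real (cf_p \<alpha> (Suc m)) / x + real (cf_p \<alpha> m)"
    using alpha_formula[OF assms] unfolding D_def x_def by simp
  have det: "real (cf_q \<alpha> (Suc m)) * real (cf_p \<alpha> m) - real (cf_p \<alpha> (Suc m)) * real (cf_q \<alpha> m) = (-1) ^ m"
    using arg_cong[OF det_formula[of \<alpha> m], of real_of_int] by simp
  have "cf_Lambda \<alpha> (Suc m) * D = real (cf_q \<alpha> (Suc m)) * (\<alpha> * D) - real (cf_p \<alpha> (Suc m)) * D"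
    by (simp add: cf_Lambda_def algebra_simps)
  also have "\<dots> = real (cf_q \<alpha> (Suc m)) * (real (cf_p \<alpha> (Suc m)) / x + real (cf_p \<alpha> m))
      - real (cf_p \<alpha> (Suc m)) * (real (cf_q \<alpha> (Suc m)) / x + real (cf_q \<alpha> m))"
    unfolding af unfolding D_def ..
  also have "\<dots> = real (cf_q \<alpha> (Suc m)) * real (cf_p \<alpha> m) - real (cf_p \<alpha> (Suc m)) * real (cf_q \<alpha> m)"
    by (simp add: algebra_simps)
  also have "\<dots> = (-1) ^ m" by (rule det)
  finally have "\<bar>cf_Lambda \<alpha> (Suc m) * D\<bar> = 1" by simp
  then have "\<bar>cf_Lambda \<alpha> (Suc m)\<bar> * D = 1" using Dpos by (simp add: abs_mult)
  then show ?thesis using Dpos unfolding D_def[symmetric] x_def[symmetric] by (simp add: field_simps)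
qed

lemma alpha_minus:
  assumes "0 < \<alpha>" "\<alpha> < 1" "\<alpha> \<notin> \<rat>"
  shows "cf_alpha_minus \<alpha> (Suc m) = real (cf_q \<alpha> m) / real (cf_q \<alpha> (Suc m))"
proof (induction m)
  case 0
  then show ?case by (simp add: cf_alpha_minus_def)
next
  case (Suc m)
  have q1: "cf_q \<alpha> (Suc m) \<ge> 1" using q_grow[OF assms] by blast
  have "cf_alpha_minus \<alpha> (Suc (Suc m)) = 1 / (real (cf_a \<alpha> (Suc m)) + cf_alpha_minus \<alpha> (Suc m))"
    by (simp add: cf_alpha_minus_def)
  also have "\<dots> = real (cf_q \<alpha> (Suc m)) / real (cf_q \<alpha> (Suc (Suc m)))"
    unfolding Suc using q1 by (simp add: field_simps)
  finally show ?case .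
qed

lemma c_eq:
  assumes "0 < \<alpha>" "\<alpha> < 1" "\<alpha> \<notin> \<rat>"
  shows "cf_c \<alpha> (Suc m) = real (cf_q \<alpha> (Suc m)) * \<bar>cf_Lambda \<alpha> (Suc m)\<bar>"
    and "0 < cf_c \<alpha> (Suc m)" "cf_c \<alpha> (Suc m) < 1"
proof -
  define x where "x = cf_x \<alpha> m"
  have xb: "x > 0" "x < 1" using cf_x_bounds[OF assms] x_def by auto
  have q1: "cf_q \<alpha> (Suc m) \<ge> 1" using q_grow[OF assms] by blast
  have ap: "cf_alpha_plus \<alpha> (Suc m) = 1 / x"
    using inv_x[OF assms, of m] unfolding cf_alpha_plus_def x_def by simp
  have ce: "cf_c \<alpha> (Suc m) = 1 / (1 / x + real (cf_q \<alpha> m) / real (cf_q \<alpha> (Suc m)))"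
    unfolding cf_c_def ap alpha_minus[OF assms] ..
  show "cf_c \<alpha> (Suc m) = real (cf_q \<alpha> (Suc m)) * \<bar>cf_Lambda \<alpha> (Suc m)\<bar>"
    unfolding ce Lambda_abs[OF assms] x_def[symmetric] using q1 xb by (simp add: field_simps)
  have g: "1 < 1 / x + real (cf_q \<alpha> m) / real (cf_q \<alpha> (Suc m))"
  proof -
    have "1 < 1/x" using xb by simp
    moreover have "0 \<le> real (cf_q \<alpha> m) / real (cf_q \<alpha> (Suc m))" by simp
    ultimately show ?thesis by linarith
  qed
  show "0 < cf_c \<alpha> (Suc m)" "cf_c \<alpha> (Suc m) < 1" unfolding ce using g by auto
qed

lemma xi_bound: "\<bar>cf_xi \<alpha> n t\<bar> \<le> 1/2"
proof -
  define y where "y = real t * real (cf_q \<alpha> (n - 1)) / real (cf_q \<alpha> n)"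
  have "0 \<le> frac y" "frac y < 1" by (simp_all add: frac_lt_1)
  then show ?thesis unfolding cf_xi_def y_def[symmetric] by arith
qed

lemma xi_zero: "cf_xi \<alpha> n 0 = - 1/2"
  unfolding cf_xi_def by simp

lemma xi_sym:
  assumes "0 < \<alpha>" "\<alpha> < 1" "\<alpha> \<notin> \<rat>" "0 < t" "t < cf_q \<alpha> (Suc m)"
  shows "cf_xi \<alpha> (Suc m) (cf_q \<alpha> (Suc m) - t) = - cf_xi \<alpha> (Suc m) t"
proof -
  define Q where "Q = cf_q \<alpha> (Suc m)"
  define a where "a = cf_q \<alpha> m"
  define y where "y = real t * real a / real Q"
  have Qpos: "Q > 0" using assms Q_def by linarith
  have yZ: "y \<notin> \<int>"
  proof
    assume "y \<in> \<int>"
    then obtain k where k: "y = of_int k" by (metis Ints_cases)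
    then have "real t * real a = real Q * of_int k" using Qpos unfolding y_def by (simp add: field_simps)
    then have "of_int (int t * int a) = (of_int (int Q * k) :: real)" by simp
    then have e: "int t * int a = int Q * k" by (metis of_int_eq_iff)
    have det: "int Q * int (cf_p \<alpha> m) - int (cf_p \<alpha> (Suc m)) * int a = (-1) ^ m"
      using det_formula[of \<alpha> m] unfolding Q_def a_def .
    have "int t * (-1) ^ m = int Q * (int t * int (cf_p \<alpha> m)) - int (cf_p \<alpha> (Suc m)) * (int t * int a)"
      unfolding det[symmetric] by (simp add: algebra_simps)
    also have "\<dots> = int Q * (int t * int (cf_p \<alpha> m) - int (cf_p \<alpha> (Suc m)) * k)"
      unfolding e by (simp add: algebra_simps)
    finally have "int Q dvd int t * (-1) ^ m" by simp
    then have "int Q dvd int t" by (simp add: dvd_mult_unit_iff is_unit_power_iff) 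
    then have "Q dvd t" by simp
    then have "Q \<le> t" using assms(4) by (simp add: dvd_imp_le)
    then show False using assms(5) Q_def by simp
  qed
  have "real (Q - t) * real a / real Q = of_int (int a) + (- y)"
    using assms(5) Qpos unfolding y_def Q_def[symmetric] by (simp add: of_nat_diff field_simps)
  then have "frac (real (Q - t) * real a / real Q) = 1 - frac y"
  proof -
    have "frac (of_int (int a) + (-y)) = frac (-y)" by (rule frac_add_of_int_left)
    also have "\<dots> = 1 - frac y" using yZ by (simp add: frac_neg)
    finally show ?thesis using \<open>real (Q - t) * real a / real Q = of_int (int a) + (- y)\<close> by simp
  qed
  then show ?thesis unfolding cf_xi_def y_def by (simp add: Q_def a_def)
qed

lemma cos_lb: "1 - x\<^sup>2 / 2 \<le> cos (x::real)"
proof -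
  have "cos x = cos (2 * (x/2))" by simp
  also have "\<dots> = 1 - 2 * (sin (x/2))\<^sup>2" by (rule cos_double_sin)
  finally have e: "cos x = 1 - 2 * (sin (x/2))\<^sup>2" .
  have "\<bar>sin (x/2)\<bar> \<le> \<bar>x/2\<bar>" by (rule abs_sin_x_le_abs_x)
  then have "(sin (x/2))\<^sup>2 \<le> (x/2)\<^sup>2"
    by (metis abs_le_square_iff)
  then show ?thesis using e by (simp add: power_divide)
qed

lemma sin_lb:
  fixes x :: real assumes "x \<ge> 0" shows "x - x^3/6 \<le> sin x"
proof -
  let ?f = "\<lambda>x. sin x - x + x^3/6"
  have d: "(?f has_real_derivative cos u - 1 + u\<^sup>2/2) (at u)" for u :: real
  proof -
    have "(?f has_real_derivative cos u - 1 + (real 3 * u ^ (3 - Suc 0)) / 6) (at u)"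
      by (intro DERIV_add DERIV_diff DERIV_sin DERIV_ident DERIV_cdivide DERIV_pow)
    moreover have "(real 3 * u ^ (3 - Suc 0)) / 6 = u\<^sup>2/2" by (simp add: numeral_eq_Suc)
    ultimately show ?thesis by simp
  qed
  have nn: "cos u - 1 + u\<^sup>2/2 \<ge> 0" for u::real using cos_lb[of u] by linarith
  have "?f 0 \<le> ?f x"
    by (rule DERIV_nonneg_imp_nondecreasing[OF assms]) (use d nn in blast)
  then show ?thesis by simp
qed

lemma sin_third:
  fixes x :: real assumes "0 \<le> x" "x \<le> 2" shows "x / 3 \<le> sin x"
proof -
  have "x^3/6 \<le> 2 * x / 3"
  proof -
    have "x * x \<le> 2 * 2" using assms by (intro mult_mono) auto
    then have "x^3 \<le> 4 * x" using assms by (simp add: power3_eq_cube mult_right_mono)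
    then show ?thesis by simp
  qed
  then show ?thesis using sin_lb[OF assms(1)] by linarith
qed

lemma prod_diff_le:
  fixes f g :: "'a \<Rightarrow> real"
  assumes "finite A" "\<And>x. x \<in> A \<Longrightarrow> 0 \<le> f x \<and> f x \<le> 1 \<and> 0 \<le> g x \<and> g x \<le> 1"
  shows "\<bar>prod f A - prod g A\<bar> \<le> (\<Sum>x\<in>A. \<bar>f x - g x\<bar>)"
  using assms
proof (induction A rule: finite_induct)
  case empty
  then show ?case by simp
next
  case (insert a A)
  have P: "0 \<le> prod f A" "prod f A \<le> 1" using insert by (auto intro: prod_nonneg prod_le_1)
  have Q: "0 \<le> g a" "g a \<le> 1" using insert by auto
  have IH: "\<bar>prod f A - prod g A\<bar> \<le> (\<Sum>x\<in>A. \<bar>f x - g x\<bar>)" using insert by auto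
  have "\<bar>f a * prod f A - g a * prod g A\<bar> = \<bar>(f a - g a) * prod f A + g a * (prod f A - prod g A)\<bar>"
    by (intro arg_cong[where f=abs]) (simp add: algebra_simps)
  also have "\<dots> \<le> \<bar>f a - g a\<bar> * prod f A + g a * \<bar>prod f A - prod g A\<bar>"
    using P Q abs_triangle_ineq[of "(f a - g a) * prod f A" "g a * (prod f A - prod g A)"]
    by (simp add: abs_mult)
  also have "\<dots> \<le> \<bar>f a - g a\<bar> + \<bar>prod f A - prod g A\<bar>"
    using P Q mult_left_le[of "prod f A" "\<bar>f a - g a\<bar>"] mult_left_le_one_le[of "\<bar>prod f A - prod g A\<bar>" "g a"]
    by simp
  finally have fin: "\<bar>f a * prod f A - g a * prod g A\<bar> \<le> \<bar>f a - g a\<bar> + \<bar>prod f A - prod g A\<bar>" .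
  have e1: "prod f (insert a A) = f a * prod f A" "prod g (insert a A) = g a * prod g A"
    using insert(1,2) by simp_all
  have e2: "(\<Sum>x\<in>insert a A. \<bar>f x - g x\<bar>) = \<bar>f a - g a\<bar> + (\<Sum>x\<in>A. \<bar>f x - g x\<bar>)"
    using insert(1,2) by simp
  show ?case unfolding e1 e2 using fin IH by linarith
qed

lemma sum_inv_sq:
  assumes "1 \<le> a" "a \<le> b"
  shows "(\<Sum>t = Suc a..b. 1 / (real t)\<^sup>2) \<le> 1 / real a - 1 / real b"
  using assms(2)
proof (induction b rule: dec_induct)
  case base
  then show ?case by simp
next
  case (step b)
  have b1: "real b \<ge> 1" using assms step by simp
  have e: "1 / real b - 1 / real (Suc b) = 1 / (real b * real (Suc b))" using b1 by (simp add: field_simps)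
  have "real b * real (Suc b) \<le> (real (Suc b))\<^sup>2" by (simp add: power2_eq_square)
  then have "1 / (real (Suc b))\<^sup>2 \<le> 1 / (real b * real (Suc b))" using b1 by (intro divide_left_mono) auto
  then have "1 / (real (Suc b))\<^sup>2 \<le> 1 / real b - 1 / real (Suc b)" using e by simp
  then show ?case using step by simp
qed

lemma small_est:
  fixes u v :: real
  assumes "0 < u" "u \<le> v" "v \<le> 1"
  shows "\<bar>(sin u)\<^sup>2 / (sin v)\<^sup>2 - u\<^sup>2 / v\<^sup>2\<bar> \<le> u\<^sup>2"
proof -
  define a where "a = sin u"
  define b where "b = sin v"
  define \<rho> where "\<rho> = u / v"
  have v0: "0 < v" using assms by linarith
  have au: "a \<le> u" using sin_x_le_x assms a_def by simp
  have al: "u * (1 - u\<^sup>2/6) \<le> a" using sin_lb[of u] assms a_def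
    by (simp add: algebra_simps power2_eq_square power3_eq_cube)
  have bv: "b \<le> v" using sin_x_le_x v0 b_def by simp
  have bl: "v * (1 - v\<^sup>2/6) \<le> b" using sin_lb[of v] v0 b_def
    by (simp add: algebra_simps power2_eq_square power3_eq_cube)
  have u1: "u\<^sup>2 \<le> 1" using assms by (simp add: power_le_one)
  have v1: "v\<^sup>2 \<le> 1" using assms by (simp add: power_le_one)
  have uv2: "u\<^sup>2 \<le> v\<^sup>2" using assms by (simp add: power_mono)
  have "0 < 1 - u\<^sup>2/6" using u1 by simp
  then have "0 < u * (1 - u\<^sup>2/6)" using assms by simp
  then have a0: "0 < a" using al by linarith
  have "0 < 1 - v\<^sup>2/6" using v1 by simp
  then have vw0: "0 < v * (1 - v\<^sup>2/6)" using v0 by simp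
  then have b0: "0 < b" using bl by linarith
  have rho0: "0 < \<rho>" "\<rho> \<le> 1" using assms v0 unfolding \<rho>_def by auto
  have rhov: "\<rho> * v = u" using v0 unfolding \<rho>_def by simp
  have r_up: "a / b \<le> \<rho> * (1 + v\<^sup>2/5)"
  proof -
    have "a / b \<le> u / (v * (1 - v\<^sup>2/6))"
      using frac_le[of u a "v * (1 - v\<^sup>2/6)" b] au bl vw0 assms by simp
    also have "\<dots> \<le> \<rho> * (1 + v\<^sup>2/5)"
    proof -
      have w: "0 < 1 - v\<^sup>2/6" using v1 by simp
      have pp: "v\<^sup>2 * v\<^sup>2 \<le> v\<^sup>2" by (rule mult_left_le[OF v1]) simp
      have "(1 - v\<^sup>2/6) * (1 + v\<^sup>2/5) = 1 + v\<^sup>2/30 - v\<^sup>2 * v\<^sup>2/30" by (simp add: field_simps)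
      then have "1 \<le> (1 - v\<^sup>2/6) * (1 + v\<^sup>2/5)" using pp by linarith
      then show ?thesis using w v0 assms unfolding \<rho>_def by (simp add: field_simps)
    qed
    finally show ?thesis .
  qed
  have r_lo: "\<rho> * (1 - u\<^sup>2/6) \<le> a / b"
  proof -
    have "\<rho> * (1 - u\<^sup>2/6) = u * (1 - u\<^sup>2/6) / v" unfolding \<rho>_def by simp
    also have "\<dots> \<le> a / b" using frac_le[of a "u * (1 - u\<^sup>2/6)" b v] al bv b0 a0 by simp
    finally show ?thesis .
  qed
  have r0: "0 < a / b" using a0 b0 by simp
  have sq: "(sin u)\<^sup>2 / (sin v)\<^sup>2 = (a/b)\<^sup>2" "u\<^sup>2 / v\<^sup>2 = \<rho>\<^sup>2"
    unfolding a_def b_def \<rho>_def by (simp_all add: power_divide)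
  have up: "(a/b)\<^sup>2 - \<rho>\<^sup>2 \<le> u\<^sup>2"
  proof -
    have "(a/b)\<^sup>2 \<le> (\<rho> * (1 + v\<^sup>2/5))\<^sup>2" using r_up r0 by (simp add: power_mono)
    also have "\<dots> = \<rho>\<^sup>2 + \<rho>\<^sup>2 * v\<^sup>2 * (2/5 + v\<^sup>2/25)" by (simp add: algebra_simps power2_eq_square)
    also have "\<dots> \<le> \<rho>\<^sup>2 + \<rho>\<^sup>2 * v\<^sup>2 * 1"
      using v1 by (intro add_left_mono mult_left_mono) auto
    also have "\<dots> = \<rho>\<^sup>2 + u\<^sup>2" using rhov by (simp add: power_mult_distrib[symmetric])
    finally show ?thesis by simp
  qed
  have lo: "\<rho>\<^sup>2 - (a/b)\<^sup>2 \<le> u\<^sup>2"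
  proof -
    have p: "0 \<le> \<rho> * (1 - u\<^sup>2/6)" using rho0 u1 by simp
    have "(\<rho> * (1 - u\<^sup>2/6))\<^sup>2 \<le> (a/b)\<^sup>2" using r_lo p by (simp add: power_mono)
    moreover have "(\<rho> * (1 - u\<^sup>2/6))\<^sup>2 = \<rho>\<^sup>2 - \<rho>\<^sup>2 * u\<^sup>2 * (1/3 - u\<^sup>2/36)"
      by (simp add: algebra_simps power2_eq_square)
    moreover have "\<rho>\<^sup>2 * u\<^sup>2 * (1/3 - u\<^sup>2/36) \<le> 1 * u\<^sup>2 * 1"
    proof -
      have h: "1/3 - u\<^sup>2/36 \<le> 1" using zero_le_power2[of u] by linarith
      show ?thesis using rho0 u1 h by (intro mult_mono) (auto simp: power_le_one)
    qed
    ultimately show ?thesis by linarith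
  qed
  show ?thesis unfolding sq using up lo by linarith
qed

lemma one_side:
  fixes L q \<phi> m S0 St :: real
  assumes Lpos: "0 < L" and qpos: "0 < q" and Lq: "L * q < 1"
    and ph: "(m - 1/2) / q \<le> \<phi>" "\<phi> \<le> 1/2" and m1: "1 \<le> m"
    and S0: "S0 = 2 * sin (pi * (L/2))" and St: "St = 2 * sin (pi * \<phi>)"
  shows "S0 < St \<and> S0\<^sup>2 / St\<^sup>2 \<le> 9 / m\<^sup>2"
proof -
  have L1: "L < 1 / q" using Lq qpos by (simp add: field_simps)
  have "(1/2) / q \<le> (m - 1/2) / q" using m1 qpos by (intro divide_right_mono) auto
  moreover have "L/2 < (1/2) / q" using L1 by simp
  ultimately have Lph: "L/2 < \<phi>" using ph by linarith
  have "sin (pi * (L/2)) < sin (pi * \<phi>)"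
  proof (rule sin_monotone_2pi)
    have "0 < pi * (L / 2)" using Lpos by simp
    moreover have "- (pi / 2) \<le> 0" by simp
    ultimately show "- (pi / 2) \<le> pi * (L / 2)" by linarith
    show "pi * (L / 2) < pi * \<phi>" using Lph by simp
    show "pi * \<phi> \<le> pi / 2" using ph by simp
  qed
  then have lt: "S0 < St" using S0 St by simp
  have S0ub: "S0 \<le> pi * L" using sin_x_le_x[of "pi * (L/2)"] Lpos S0 by simp
  have S0pos: "0 < S0"
  proof -
    have "L < 2" using Lph ph by linarith
    then have "pi * (L/2) < pi" by simp
    then show ?thesis using S0 Lpos sin_gt_zero[of "pi * (L/2)"] by simp
  qed
  have php: "0 \<le> pi * \<phi>" using Lph Lpos by simp
  have ph2: "pi * \<phi> \<le> 2"
  proof -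
    have "pi * \<phi> \<le> pi * (1/2)" using ph by (intro mult_left_mono) auto
    then show ?thesis using pi_less_4 by linarith
  qed
  have st3: "pi * \<phi> / 3 \<le> sin (pi * \<phi>)" by (rule sin_third[OF php ph2])
  have "m / (2 * q) \<le> (m - 1/2) / q" using m1 qpos by (simp add: field_simps)
  then have phm: "m / (2 * q) \<le> \<phi>" using ph by linarith
  have Stlb: "pi * m / (3 * q) \<le> St"
  proof -
    have "pi * m / (3 * q) = 2 * (pi * (m / (2 * q)) / 3)" by (simp add: field_simps)
    also have "\<dots> \<le> 2 * (pi * \<phi> / 3)"
    proof -
      have "pi * (m / (2 * q)) \<le> pi * \<phi>" using phm by (intro mult_left_mono) auto
      then have "pi * (m / (2 * q)) / 3 \<le> pi * \<phi> / 3" by (rule divide_right_mono) simp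
      then show ?thesis by linarith
    qed
    also have "\<dots> \<le> St" using st3 St by simp
    finally show ?thesis .
  qed
  have mpos: "0 < pi * m / (3 * q)" using m1 qpos by simp
  have "S0 / St \<le> (pi * L) / (pi * m / (3 * q))"
    using frac_le[OF _ S0ub mpos Stlb] Lpos by simp
  also have "\<dots> = 3 * (L * q) / m" using m1 qpos by (simp add: field_simps)
  also have "\<dots> \<le> 3 / m" using Lq m1 by (simp add: divide_right_mono)
  finally have r: "S0 / St \<le> 3 / m" .
  have "S0\<^sup>2 / St\<^sup>2 = (S0 / St)\<^sup>2" by (simp add: power_divide)
  also have "\<dots> \<le> (3 / m)\<^sup>2" using r S0pos lt by (intro power_mono) auto
  also have "\<dots> = 9 / m\<^sup>2" by (simp add: power_divide)
  finally show ?thesis using lt by simp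
qed



lemma analytic:
  fixes q \<kappa> :: nat and L c :: real and \<xi> s :: "nat \<Rightarrow> real"
  assumes q64: "64 \<le> q" and Lpos: "0 < L" and cL: "c = real q * L" and c1: "c < 1"
    and xib: "\<And>t. \<bar>\<xi> t\<bar> \<le> 1/2" and xi0: "\<xi> 0 = -1/2"
    and xis: "\<And>t. 0 < t \<Longrightarrow> t < q \<Longrightarrow> \<xi> (q - t) = - \<xi> t"
    and sdef: "\<And>t. s t = 2 * sin (pi * (real t / real q - L * \<xi> t))"
    and kdef: "\<kappa> = nat \<lfloor>sqrt (real q)\<rfloor>"
  shows "\<bar>(\<Prod>t = 1..q - 1. sqrt (1 - (s 0)\<^sup>2 / (s t)\<^sup>2))
          - (\<Prod>t = 1..\<kappa>. 1 - 1 / (4 * (real t / c - \<xi> t)\<^sup>2))\<bar> \<le> 22 / real \<kappa>"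
proof -
  define \<theta> where "\<theta> t = real t / real q - L * \<xi> t" for t
  define F where "F t = 1 - (s 0)\<^sup>2 / (s t)\<^sup>2" for t
  define G where "G t = 1 - 1 / (4 * (real t / c - \<xi> t)\<^sup>2)" for t
  have qr: "64 \<le> real q" using q64 by simp
  have qpos: "0 < real q" using qr by simp
  have Lq: "L * real q < 1" using cL c1 by (simp add: mult.commute)
  have L1: "L < 1 / real q" using Lq qpos by (simp add: field_simps)
  have s\<theta>: "s t = 2 * sin (pi * \<theta> t)" for t using sdef \<theta>_def by simp
  have s0: "s 0 = 2 * sin (pi * (L/2))" using s\<theta>[of 0] xi0 \<theta>_def by simp
  have Lxi: "- (L/2) \<le> L * \<xi> t \<and> L * \<xi> t \<le> L/2" for t
  proof -
    have "\<bar>L * \<xi> t\<bar> \<le> L * (1/2)" using xib[of t] Lpos by (simp add: abs_mult)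
    then show ?thesis by arith
  qed
  have Lh: "L/2 \<le> (1/2) / real q" using L1 by simp
  have s0pos: "0 < s 0"
  proof -
    have "1 / real q \<le> 1" using qr by simp
    then have "pi * (L/2) < pi" using L1 by simp
    then show ?thesis using s0 Lpos sin_gt_zero[of "pi * (L/2)"] by simp
  qed
  have \<theta>lo: "(real t - 1/2) / real q \<le> \<theta> t" for t
  proof -
    have "(real t - 1/2) / real q = real t / real q - (1/2) / real q" using qpos by (simp add: field_simps)
    then show ?thesis using Lxi[of t] Lh unfolding \<theta>_def by linarith
  qed
  have \<theta>hi: "\<theta> t \<le> (real t + 1/2) / real q" for t
  proof -
    have "(real t + 1/2) / real q = real t / real q + (1/2) / real q" using qpos by (simp add: field_simps)
    then show ?thesis using Lxi[of t] Lh unfolding \<theta>_def by linarith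
  qed
  have key: "s 0 < s t \<and> (s 0)\<^sup>2 / (s t)\<^sup>2 \<le> 9 / (real t)\<^sup>2 + 9 / (real (q - t))\<^sup>2"
    if t1: "1 \<le> t" and tq: "t < q" for t
  proof (cases "\<theta> t \<le> 1/2")
    case True
    have "s 0 < s t \<and> (s 0)\<^sup>2 / (s t)\<^sup>2 \<le> 9 / (real t)\<^sup>2"
      by (rule one_side[OF Lpos qpos Lq \<theta>lo True _ s0 s\<theta>]) (use t1 in simp)
    moreover have "0 \<le> 9 / (real (q - t))\<^sup>2" by simp
    ultimately show ?thesis by linarith
  next
    case False
    have e: "real (q - t) = real q - real t" using tq by simp
    have ph: "(real (q - t) - 1/2) / real q \<le> 1 - \<theta> t"
    proof -
      have "(real (q - t) - 1/2) / real q = 1 - (real t + 1/2) / real q" using qpos e by (simp add: field_simps)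
      then show ?thesis using \<theta>hi[of t] by linarith
    qed
    have st: "s t = 2 * sin (pi * (1 - \<theta> t))"
      using s\<theta>[of t] by (simp add: right_diff_distrib)
    have "s 0 < s t \<and> (s 0)\<^sup>2 / (s t)\<^sup>2 \<le> 9 / (real (q - t))\<^sup>2"
      by (rule one_side[OF Lpos qpos Lq ph _ _ s0 st]) (use False tq in auto)
    moreover have "0 \<le> 9 / (real t)\<^sup>2" by simp
    ultimately show ?thesis by linarith
  qed
  have sym: "s (q - t) = s t" if "0 < t" "t < q" for t
  proof -
    have "\<theta> (q - t) = 1 - \<theta> t" using that xis[OF that] qpos unfolding \<theta>_def
      by (simp add: of_nat_diff field_simps)
    then show ?thesis using s\<theta>[of "q - t"] s\<theta>[of t] by (simp add: right_diff_distrib)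
  qed
  have Fb: "0 \<le> F t \<and> F t \<le> 1 \<and> 1 - F t \<le> 9 / (real t)\<^sup>2 + 9 / (real (q - t))\<^sup>2" if "1 \<le> t" "t < q" for t
  proof -
    have k: "s 0 < s t" "(s 0)\<^sup>2 / (s t)\<^sup>2 \<le> 9 / (real t)\<^sup>2 + 9 / (real (q - t))\<^sup>2" using key[OF that] by auto
    have p: "0 < s 0" using s0pos .
    have "(s 0)\<^sup>2 < (s t)\<^sup>2" using k(1) p by (simp add: power_strict_mono)
    moreover have "0 < (s t)\<^sup>2" using k(1) p by simp
    ultimately have "(s 0)\<^sup>2 / (s t)\<^sup>2 \<le> 1" by (simp add: divide_le_eq_1)
    then show ?thesis unfolding F_def using k by simp
  qed
  have sqF: "0 \<le> sqrt (F t) \<and> sqrt (F t) \<le> 1 \<and> 1 - sqrt (F t) \<le> 1 - F t" if "1 \<le> t" "t < q" for t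
  proof -
    have f: "0 \<le> F t" "F t \<le> 1" using Fb[OF that] by auto
    have a: "0 \<le> sqrt (F t)" "sqrt (F t) \<le> 1" using f by auto
    have "F t = sqrt (F t) * sqrt (F t)" using f by simp
    also have "\<dots> \<le> sqrt (F t) * 1" using a by (intro mult_left_mono) auto
    finally show ?thesis using a by simp
  qed
  have s64: "sqrt (64::real) = 8" using real_sqrt_abs[of "8::real"] by simp
  have "sqrt 64 \<le> sqrt (real q)" using qr by (rule real_sqrt_le_mono)
  then have "8 \<le> sqrt (real q)" using s64 by simp
  then have "8 \<le> \<lfloor>sqrt (real q)\<rfloor>" by (simp add: le_floor_iff)
  then have k8: "8 \<le> \<kappa>" unfolding kdef by linarith
  have kr: "real \<kappa> \<le> sqrt (real q)"
  proof -
    have "0 \<le> \<lfloor>sqrt (real q)\<rfloor>" by simp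
    then have "real \<kappa> = real_of_int \<lfloor>sqrt (real q)\<rfloor>" unfolding kdef by simp
    then show ?thesis by simp
  qed
  have kk: "real \<kappa> * real \<kappa> \<le> real q"
  proof -
    have "real \<kappa> * real \<kappa> \<le> sqrt (real q) * sqrt (real q)" using kr by (intro mult_mono) auto
    then show ?thesis by simp
  qed
  have "8 * real \<kappa> \<le> real \<kappa> * real \<kappa>" using k8 by (intro mult_right_mono) auto
  then have "real (8 * \<kappa>) \<le> real q" using kk by simp
  then have kq: "8 * \<kappa> \<le> q" by (simp only: of_nat_le_iff)
  have kpos: "0 < real \<kappa>" using k8 by simp
  define I1 where "I1 = {1..\<kappa>}"
  define I2 where "I2 = {Suc \<kappa>..q - \<kappa> - 1}"
  define I3 where "I3 = {q - \<kappa>..q - 1}"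
  have I1q: "1 \<le> t \<and> t < q" if "t \<in> I1" for t using that kq unfolding I1_def by auto
  have I2q: "1 \<le> t \<and> t < q" if "t \<in> I2" for t using that kq unfolding I2_def by auto
  have split: "{1..q-1} = (I1 \<union> I2) \<union> I3" using kq k8 unfolding I1_def I2_def I3_def by auto
  have d1: "I1 \<inter> I2 = {}" unfolding I1_def I2_def by auto
  have d2: "(I1 \<union> I2) \<inter> I3 = {}" using kq k8 unfolding I1_def I2_def I3_def by auto
  have fin: "finite I1" "finite I2" "finite I3" unfolding I1_def I2_def I3_def by auto
  define A where "A = (\<Prod>t\<in>I1. sqrt (F t))"
  define M where "M = (\<Prod>t\<in>I2. sqrt (F t))"
  define P where "P = (\<Prod>t\<in>I1. G t)"
  have B: "(\<Prod>t\<in>I3. sqrt (F t)) = A"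
    unfolding A_def
  proof (rule prod.reindex_bij_witness[of I3 "\<lambda>t. q - t" "\<lambda>t. q - t" I1])
    fix a assume a: "a \<in> I3"
    then have a1: "0 < a" "a < q" using kq k8 unfolding I3_def by auto
    show "q - (q - a) = a" using a1 by simp
    show "q - a \<in> I1" using a kq k8 unfolding I1_def I3_def by auto
    show "sqrt (F (q - a)) = sqrt (F a)" unfolding F_def using sym[OF a1] by simp
  next
    fix b assume b: "b \<in> I1"
    then show "q - (q - b) = b" using kq unfolding I1_def by auto
    show "q - b \<in> I3" using b kq unfolding I1_def I3_def by auto
  qed
  have Cq: "(\<Prod>t = 1..q - 1. sqrt (1 - (s 0)\<^sup>2 / (s t)\<^sup>2)) = A * M * A"
  proof -
    have "(\<Prod>t = 1..q - 1. sqrt (1 - (s 0)\<^sup>2 / (s t)\<^sup>2)) = (\<Prod>t\<in>(I1 \<union> I2) \<union> I3. sqrt (F t))"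
      unfolding split[symmetric] F_def ..
    also have "\<dots> = (\<Prod>t\<in>I1 \<union> I2. sqrt (F t)) * (\<Prod>t\<in>I3. sqrt (F t))"
      using fin d2 by (intro prod.union_disjoint) auto
    also have "(\<Prod>t\<in>I1 \<union> I2. sqrt (F t)) = A * M"
      unfolding A_def M_def using fin d1 by (intro prod.union_disjoint) auto
    finally show ?thesis using B by simp
  qed
  have Pq: "(\<Prod>t = 1..\<kappa>. 1 - 1 / (4 * (real t / c - \<xi> t)\<^sup>2)) = P"
    unfolding P_def I1_def G_def ..
  have A01: "0 \<le> A" "A \<le> 1" unfolding A_def using sqF I1q by (auto intro!: prod_nonneg prod_le_1)
  have M01: "0 \<le> M" "M \<le> 1" unfolding M_def using sqF I2q by (auto intro!: prod_nonneg prod_le_1)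
  have A2: "A * A = (\<Prod>t\<in>I1. F t)"
  proof -
    have "A * A = (\<Prod>t\<in>I1. sqrt (F t) * sqrt (F t))" unfolding A_def by (simp only: prod.distrib)
    also have "\<dots> = (\<Prod>t\<in>I1. F t)"
      by (rule prod.cong) (use Fb I1q in auto)
    finally show ?thesis .
  qed
  have sum1: "(\<Sum>t\<in>I2. 1 / (real t)\<^sup>2) \<le> 1 / real \<kappa>"
  proof -
    have "(\<Sum>t\<in>I2. 1 / (real t)\<^sup>2) \<le> 1 / real \<kappa> - 1 / real (q - \<kappa> - 1)"
      unfolding I2_def using k8 kq by (intro sum_inv_sq) auto
    moreover have "1 / real \<kappa> - 1 / real (q - \<kappa> - 1) \<le> 1 / real \<kappa>" by simp
    ultimately show ?thesis by (rule order_trans)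
  qed
  have sum2: "(\<Sum>t\<in>I2. 1 / (real (q - t))\<^sup>2) = (\<Sum>t\<in>I2. 1 / (real t)\<^sup>2)"
  proof (rule sum.reindex_bij_witness[of I2 "\<lambda>t. q - t" "\<lambda>t. q - t" I2])
    fix a assume a: "a \<in> I2"
    show "q - (q - a) = a" using a kq unfolding I2_def by auto
    show "q - a \<in> I2" using a kq unfolding I2_def by auto
    show "1 / (real (q - a))\<^sup>2 = 1 / (real (q - a))\<^sup>2" ..
  next
    fix b assume b: "b \<in> I2"
    show "q - (q - b) = b" using b kq unfolding I2_def by auto
    show "q - b \<in> I2" using b kq unfolding I2_def by auto
  qed
  have Mb: "1 - M \<le> 18 / real \<kappa>"
  proof -
    have "\<bar>(\<Prod>t\<in>I2. 1) - M\<bar> \<le> (\<Sum>t\<in>I2. \<bar>1 - sqrt (F t)\<bar>)"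
      unfolding M_def using fin sqF I2q by (intro prod_diff_le) auto
    then have "1 - M \<le> (\<Sum>t\<in>I2. \<bar>1 - sqrt (F t)\<bar>)" by simp
    also have "\<dots> \<le> (\<Sum>t\<in>I2. 9 * (1 / (real t)\<^sup>2) + 9 * (1 / (real (q - t))\<^sup>2))"
    proof (rule sum_mono)
      fix t assume t: "t \<in> I2"
      have "\<bar>1 - sqrt (F t)\<bar> = 1 - sqrt (F t)" using sqF I2q[OF t] by simp
      also have "\<dots> \<le> 1 - F t" using sqF I2q[OF t] by simp
      also have "\<dots> \<le> 9 / (real t)\<^sup>2 + 9 / (real (q - t))\<^sup>2" using Fb I2q[OF t] by simp
      finally show "\<bar>1 - sqrt (F t)\<bar> \<le> 9 * (1 / (real t)\<^sup>2) + 9 * (1 / (real (q - t))\<^sup>2)" by simp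
    qed
    also have "\<dots> = 9 * (\<Sum>t\<in>I2. 1 / (real t)\<^sup>2) + 9 * (\<Sum>t\<in>I2. 1 / (real (q - t))\<^sup>2)"
      by (simp add: sum.distrib sum_distrib_left)
    also have "\<dots> \<le> 18 / real \<kappa>" unfolding sum2 using sum1 by simp
    finally show ?thesis .
  qed
  have FG: "\<bar>F t - G t\<bar> \<le> 4 / (real q)\<^sup>2" if t: "t \<in> I1" for t
  proof -
    define u where "u = pi * (L/2)"
    define v where "v = pi * \<theta> t"
    have t1: "1 \<le> t" "t \<le> \<kappa>" using t unfolding I1_def by auto
    have "(1/2) / real q \<le> (real t - 1/2) / real q" using t1 qpos by (intro divide_right_mono) auto
    then have Lth: "L/2 \<le> \<theta> t" using \<theta>lo[of t] Lh by linarith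
    have u0: "0 < u" unfolding u_def using Lpos by simp
    have uv: "u \<le> v" unfolding u_def v_def using Lth by (intro mult_left_mono) auto
    have th0: "0 < \<theta> t" using Lth Lpos by linarith
    have v1: "v \<le> 1"
    proof -
      have "v \<le> 4 * \<theta> t" unfolding v_def using pi_less_4 th0 by (intro mult_right_mono) auto
      also have "\<dots> \<le> 4 * ((real t + 1/2) / real q)" using \<theta>hi[of t] by linarith
      also have "\<dots> \<le> 4 * ((real \<kappa> + 1/2) / real q)" using t1 qpos by (intro mult_left_mono divide_right_mono) auto
      also have "\<dots> = (4 * real \<kappa> + 2) / real q" using qpos by (simp add: field_simps)
      also have "\<dots> \<le> 1"
      proof -
        have "4 * real \<kappa> + 2 \<le> real q" using kq k8 by linarith
        then show ?thesis using qpos by simp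
      qed
      finally show ?thesis .
    qed
    have se: "\<bar>(sin u)\<^sup>2 / (sin v)\<^sup>2 - u\<^sup>2 / v\<^sup>2\<bar> \<le> u\<^sup>2" by (rule small_est[OF u0 uv v1])
    have Fe: "F t = 1 - (sin u)\<^sup>2 / (sin v)\<^sup>2" unfolding F_def s0 s\<theta>[of t] u_def v_def
      by (simp add: power_mult_distrib)
    have d: "real t / c - \<xi> t = \<theta> t / L" unfolding cL \<theta>_def using Lpos qpos by (simp add: field_simps)
    have Ge: "G t = 1 - u\<^sup>2 / v\<^sup>2" unfolding G_def d u_def v_def using Lpos th0
      by (simp add: field_simps power2_eq_square)
    have "u \<le> 2 * L" unfolding u_def using pi_less_4 Lpos by simp
    also have "\<dots> \<le> 2 / real q" using L1 by (simp add: field_simps)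
    finally have "u\<^sup>2 \<le> (2 / real q)\<^sup>2" using u0 by (intro power_mono) auto
    then have "u\<^sup>2 \<le> 4 / (real q)\<^sup>2" by (simp add: power_divide)
    then show ?thesis unfolding Fe Ge using se by simp
  qed
  have G01: "0 \<le> G t \<and> G t \<le> 1" if t: "t \<in> I1" for t
  proof -
    have t1: "1 \<le> real t" using t unfolding I1_def by auto
    have c0: "0 < c" using cL Lpos qpos by simp
    have "real t \<le> real t / c" using c0 c1 t1 by (simp add: le_divide_eq)
    moreover have "\<xi> t \<le> 1/2" using xib[of t] by arith
    ultimately have h: "1/2 \<le> real t / c - \<xi> t" using t1 by linarith
    then have "(1/2)\<^sup>2 \<le> (real t / c - \<xi> t)\<^sup>2" by (intro power_mono) auto
    then have h4: "1 \<le> 4 * (real t / c - \<xi> t)\<^sup>2" by (simp add: power_divide)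
    then have "1 / (4 * (real t / c - \<xi> t)\<^sup>2) \<le> 1" by (auto simp: divide_le_eq_1)
    moreover have "0 \<le> 1 / (4 * (real t / c - \<xi> t)\<^sup>2)" by simp
    ultimately show ?thesis unfolding G_def by linarith
  qed
  have Pb: "\<bar>A * A - P\<bar> \<le> 4 / real \<kappa>"
  proof -
    have "\<bar>A * A - P\<bar> \<le> (\<Sum>t\<in>I1. \<bar>F t - G t\<bar>)"
      unfolding A2 P_def using fin Fb I1q G01 by (intro prod_diff_le) auto
    also have "\<dots> \<le> (\<Sum>t\<in>I1. 4 / (real q)\<^sup>2)" using FG by (intro sum_mono) auto
    also have "\<dots> = real \<kappa> * (4 / (real q)\<^sup>2)" unfolding I1_def by simp
    also have "\<dots> \<le> 4 / real \<kappa>"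
    proof -
      have "real q \<le> real q * real q" using qr by (intro mult_le_cancel_left1[THEN iffD2]) auto
      then have "real \<kappa> * real \<kappa> \<le> (real q)\<^sup>2" using kk by (simp add: power2_eq_square)
      then show ?thesis using kpos qpos by (simp add: field_simps)
    qed
    finally show ?thesis .
  qed
  have "\<bar>A * M * A - P\<bar> \<le> \<bar>A * A * (1 - M)\<bar> + \<bar>A * A - P\<bar>"
  proof -
    have "A * M * A - P = - (A * A * (1 - M)) + (A * A - P)" by (simp add: algebra_simps)
    then show ?thesis using abs_triangle_ineq[of "- (A * A * (1 - M))" "A * A - P"] by simp
  qed
  also have "\<bar>A * A * (1 - M)\<bar> \<le> 1 - M"
  proof -
    have "A * A \<le> 1" using A01 by (simp add: mult_le_one)
    then have "A * A * (1 - M) \<le> 1 - M" using M01 A01 by (intro mult_left_le_one_le) auto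
    moreover have "0 \<le> A * A * (1 - M)" using A01 M01 by simp
    ultimately show ?thesis by simp
  qed
  finally have "\<bar>A * M * A - P\<bar> \<le> 1 - M + \<bar>A * A - P\<bar>" by simp
  then have "\<bar>A * M * A - P\<bar> \<le> 18 / real \<kappa> + 4 / real \<kappa>" using Mb Pb by linarith
  then show ?thesis unfolding Cq Pq by simp
qed


theorem lemma4p3:
  fixes \<alpha> :: real
  assumes "0 < \<alpha>" "\<alpha> < 1" "\<alpha> \<notin> \<rat>"
  shows "\<exists>K::real. \<exists>N. \<forall>n\<ge>N.
    \<bar>cf_C \<alpha> n - (\<Prod>t = 1..cf_kappa \<alpha> n.
        1 - 1 / (4 * (real t / cf_c \<alpha> n - cf_xi \<alpha> n t)\<^sup>2))\<bar>
      \<le> K / real (cf_kappa \<alpha> n)"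
proof -
  have "\<forall>n\<ge>66. \<bar>cf_C \<alpha> n - (\<Prod>t = 1..cf_kappa \<alpha> n.
        1 - 1 / (4 * (real t / cf_c \<alpha> n - cf_xi \<alpha> n t)\<^sup>2))\<bar>
      \<le> 22 / real (cf_kappa \<alpha> n)"
  proof (intro allI impI)
    fix n :: nat assume n66: "66 \<le> n"
    define k where "k = n - 2"
    have nk: "n = Suc (Suc k)" using n66 unfolding k_def by simp
    define m where "m = Suc k"
    have nm: "n = Suc m" using nk m_def by simp
    have "cf_q \<alpha> (Suc (Suc k)) \<ge> k + 1" using q_grow[OF assms] by blast
    then have q64: "64 \<le> cf_q \<alpha> n" using nk n66 by simp
    have cL: "cf_c \<alpha> n = real (cf_q \<alpha> n) * \<bar>cf_Lambda \<alpha> n\<bar>"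
      and c0: "0 < cf_c \<alpha> n" and c1: "cf_c \<alpha> n < 1" using c_eq[OF assms, of m] nm by auto
    have qpos: "0 < real (cf_q \<alpha> n)" using q64 by simp
    have Lpos: "0 < \<bar>cf_Lambda \<alpha> n\<bar>"
    proof (rule ccontr)
      assume "\<not> 0 < \<bar>cf_Lambda \<alpha> n\<bar>"
      then have "\<bar>cf_Lambda \<alpha> n\<bar> = 0" by simp
      then show False using cL c0 by simp
    qed
    have xis: "\<And>t. 0 < t \<Longrightarrow> t < cf_q \<alpha> n \<Longrightarrow> cf_xi \<alpha> n (cf_q \<alpha> n - t) = - cf_xi \<alpha> n t"
      using xi_sym[OF assms] nm by blast
    have "\<bar>(\<Prod>t = 1..cf_q \<alpha> n - 1. sqrt (1 - (cf_s \<alpha> n 0)\<^sup>2 / (cf_s \<alpha> n t)\<^sup>2))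
          - (\<Prod>t = 1..cf_kappa \<alpha> n. 1 - 1 / (4 * (real t / cf_c \<alpha> n - cf_xi \<alpha> n t)\<^sup>2))\<bar>
          \<le> 22 / real (cf_kappa \<alpha> n)"
    proof (rule analytic[OF q64 Lpos cL c1])
      show "\<And>t. \<bar>cf_xi \<alpha> n t\<bar> \<le> 1/2" by (rule xi_bound)
      show "cf_xi \<alpha> n 0 = -1/2" by (simp add: xi_zero)
      show "\<And>t. 0 < t \<Longrightarrow> t < cf_q \<alpha> n \<Longrightarrow> cf_xi \<alpha> n (cf_q \<alpha> n - t) = - cf_xi \<alpha> n t" by (rule xis)
      show "\<And>t. cf_s \<alpha> n t = 2 * sin (pi * (real t / real (cf_q \<alpha> n) - \<bar>cf_Lambda \<alpha> n\<bar> * cf_xi \<alpha> n t))"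
        by (simp add: cf_s_def)
      show "cf_kappa \<alpha> n = nat \<lfloor>sqrt (real (cf_q \<alpha> n))\<rfloor>" by (simp add: cf_kappa_def)
    qed
    then show "\<bar>cf_C \<alpha> n - (\<Prod>t = 1..cf_kappa \<alpha> n.
        1 - 1 / (4 * (real t / cf_c \<alpha> n - cf_xi \<alpha> n t)\<^sup>2))\<bar>
      \<le> 22 / real (cf_kappa \<alpha> n)" unfolding cf_C_def .
  qed
  then show ?thesis by blast
qed

end
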